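(* Let $R$ be a ring, $n$ a positive integer, and $I$ a proper ideal of $R$. Then the following are equivalent: (1) $I$ is strongly weakly $n$-absorbing; (2) for any ideals $I_1,\dots,I_{n+1}$ of $R$ with $I\subseteq I_1$, if $0\neq I_1\cdots I_{n+1}\subseteq I$ then there are $n$ of the $I_i$'s whose product is contained in $I$.
   Context: All rings are commutative with $1\neq0$. A proper ideal $I$ of $R$ is strongly weakly $n$-absorbing if whenever $0\neq I_1\cdots I_{n+1}\subseteq I$ for ideals $I_1,\dots,I_{n+1}$ of $R$, there are $n$ of the $I_i$'s whose product is contained in $I$. *)

theory Defs
  imports "HOL-Algebra.Ideal_Product"
begin

definition ideals_prod :: "('a, 'b) ring_scheme \<Rightarrow> 'a set list \<Rightarrow> 'a set" where
  "ideals_prod R Is = foldr (ideal_prod R) Is (carrier R)"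

definition omit :: "nat \<Rightarrow> 'a list \<Rightarrow> 'a list" where
  "omit k xs = take k xs @ drop (Suc k) xs"

definition strongly_weakly_n_absorbing :: "('a, 'b) ring_scheme \<Rightarrow> nat \<Rightarrow> 'a set \<Rightarrow> bool" where
  "strongly_weakly_n_absorbing R n I \<longleftrightarrow>
     ideal I R \<and> I \<noteq> carrier R \<and>
     (\<forall>Is. length Is = Suc n \<and> (\<forall>J\<in>set Is. ideal J R) \<and>
           ideals_prod R Is \<noteq> {\<zero>\<^bsub>R\<^esub>} \<and> ideals_prod R Is \<subseteq> I
       \<longrightarrow> (\<exists>k<Suc n. ideals_prod R (omit k Is) \<subseteq> I))"

end

theory Submission
  imports Defs
begin

lemma ideal_prod_mono:
  assumes "A \<subseteq> A'" "B \<subseteq> B'"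
  shows "ideal_prod R A B \<subseteq> ideal_prod R A' B'"
proof
  fix s assume "s \<in> ideal_prod R A B"
  thus "s \<in> ideal_prod R A' B'"
    by (induct s rule: ideal_prod.induct) (use assms in \<open>auto intro: ideal_prod.intros\<close>)
qed

lemma ideals_prod_mono:
  "list_all2 (\<subseteq>) Xs Ys \<Longrightarrow> ideals_prod R Xs \<subseteq> ideals_prod R Ys"
  proof (induct rule: list_all2_induct)
  case Nil thus ?case by (simp add: ideals_prod_def)
next
  case (Cons x xs y ys)
  thus ?case unfolding ideals_prod_def by (simp add: ideal_prod_mono)
qed

lemma (in ring) ideals_prod_ideal:
  "\<forall>J\<in>set Xs. ideal J R \<Longrightarrow> ideal (ideals_prod R Xs) R"
  by (induct Xs) (auto simp: ideals_prod_def oneideal ideal_prod_is_ideal)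

lemma list_all2_omit:
  "list_all2 P xs ys \<Longrightarrow> list_all2 P (omit k xs) (omit k ys)"
  unfolding omit_def by (intro list_all2_appendI list_all2_takeI list_all2_dropI)

theorem mainTheorem12:
  fixes R :: "('a, 'b) ring_scheme" and n :: nat and I :: "'a set"
  assumes "cring R" and "\<one>\<^bsub>R\<^esub> \<noteq> \<zero>\<^bsub>R\<^esub>"
    and "n > 0"
    and "ideal I R" and "I \<noteq> carrier R"
  shows "strongly_weakly_n_absorbing R n I \<longleftrightarrow>
     (\<forall>Is. length Is = Suc n \<and> (\<forall>J\<in>set Is. ideal J R) \<and> I \<subseteq> Is ! 0 \<and>
           ideals_prod R Is \<noteq> {\<zero>\<^bsub>R\<^esub>} \<and> ideals_prod R Is \<subseteq> I
       \<longrightarrow> (\<exists>k<Suc n. ideals_prod R (omit k Is) \<subseteq> I))"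
proof
  assume "strongly_weakly_n_absorbing R n I"
  thus "\<forall>Is. length Is = Suc n \<and> (\<forall>J\<in>set Is. ideal J R) \<and> I \<subseteq> Is ! 0 \<and>
           ideals_prod R Is \<noteq> {\<zero>\<^bsub>R\<^esub>} \<and> ideals_prod R Is \<subseteq> I
       \<longrightarrow> (\<exists>k<Suc n. ideals_prod R (omit k Is) \<subseteq> I)"
    unfolding strongly_weakly_n_absorbing_def by blast
next
  interpret cring R by fact
  assume H: "\<forall>Is. length Is = Suc n \<and> (\<forall>J\<in>set Is. ideal J R) \<and> I \<subseteq> Is ! 0 \<and>
           ideals_prod R Is \<noteq> {\<zero>\<^bsub>R\<^esub>} \<and> ideals_prod R Is \<subseteq> I
       \<longrightarrow> (\<exists>k<Suc n. ideals_prod R (omit k Is) \<subseteq> I)"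
  show "strongly_weakly_n_absorbing R n I"
    unfolding strongly_weakly_n_absorbing_def
  proof (intro conjI assms allI impI)
    fix Is assume A: "length Is = Suc n \<and> (\<forall>J\<in>set Is. ideal J R) \<and>
           ideals_prod R Is \<noteq> {\<zero>\<^bsub>R\<^esub>} \<and> ideals_prod R Is \<subseteq> I"
    then obtain J rest where Is: "Is = J # rest" by (cases Is) auto
    have J: "ideal J R" and rest: "\<forall>K\<in>set rest. ideal K R" using A Is by auto
    define P where "P = ideals_prod R rest"
    have P: "ideal P R" unfolding P_def using rest by (rule ideals_prod_ideal)
    have prodIs: "ideals_prod R Is = ideal_prod R J P" by (simp add: Is P_def ideals_prod_def)
    define J' where "J' = J <+>\<^bsub>R\<^esub> I"
    have J'i: "ideal J' R" unfolding J'_def using J assms(4) by (rule add_ideals)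
    have JJ': "J \<subseteq> J'" "I \<subseteq> J'" unfolding J'_def
      using union_genideal[OF J assms(4)] genideal_self[of "J \<union> I"]
        ideal.Icarr[OF J] ideal.Icarr[OF assms(4)] by blast+
    define Is' where "Is' = J' # rest"
    have prodIs': "ideals_prod R Is' = ideal_prod R J' P" by (simp add: Is'_def P_def ideals_prod_def)
    have "ideal_prod R J' P = (ideal_prod R J P) <+>\<^bsub>R\<^esub> (ideal_prod R I P)"
      unfolding J'_def using ideal_prod_distr(2)[OF P J assms(4)] .
    also have "\<dots> = genideal R ((ideal_prod R J P) \<union> (ideal_prod R I P))"
      using union_genideal[OF ideal_prod_is_ideal[OF J P] ideal_prod_is_ideal[OF assms(4) P]] by simp
    also have "\<dots> \<subseteq> I"
      using A prodIs ideal_prod_inter[OF assms(4) P] by (intro genideal_minimal assms(4)) auto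
    finally have sub: "ideals_prod R Is' \<subseteq> I" using prodIs' by simp
    have "ideal_prod R J P \<subseteq> ideal_prod R J' P" using JJ' by (intro ideal_prod_mono) auto
    moreover have "\<zero>\<^bsub>R\<^esub> \<in> ideal_prod R J P"
      using additive_subgroup.zero_closed[OF ideal.axioms(1)[OF ideal_prod_is_ideal[OF J P]]] by simp
    ultimately have nz: "ideals_prod R Is' \<noteq> {\<zero>\<^bsub>R\<^esub>}" using A prodIs prodIs' by auto
    have "length Is' = Suc n" "\<forall>K\<in>set Is'. ideal K R" "I \<subseteq> Is' ! 0"
      using A Is JJ' J'i rest by (auto simp: Is'_def)
    then obtain k where k: "k < Suc n" "ideals_prod R (omit k Is') \<subseteq> I"
      using H sub nz by blast
    have "list_all2 (\<subseteq>) Is Is'"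
      using JJ' by (simp add: Is Is'_def list_all2_refl)
    hence "ideals_prod R (omit k Is) \<subseteq> ideals_prod R (omit k Is')"
      by (intro ideals_prod_mono list_all2_omit)
    thus "\<exists>k<Suc n. ideals_prod R (omit k Is) \<subseteq> I" using k by blast
  qed
qed

end
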